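(* Suppose $\xi\star\pi\in\perp\!\!\!\perp$. Then: (1) $\xi'\star\pi'\in\perp\!\!\!\perp$, where $\xi'\star\pi'$ is obtained from $\xi\star\pi$ by substituting arbitrary terms for the non-efficient occurrences of $p$; (2) if $\xi'\star\pi'$ is obtained from $\xi\star\pi$ by substituting $q_0$ for the efficient occurrence of $p$ and arbitrary terms for the non-efficient occurrences of $p$, then $\xi'\star\pi'\notin\perp\!\!\!\perp$, and indeed $\xi'\star\pi'\succ q_0\star\varpi$ for some stack $\varpi$.
   Context: Fix an integer $N\ge 0$. The set $\Lambda$ of terms is the smallest set containing the constants $B,C,I,K,W,cc,A$ and $p,q_0,\dots,q_N$, closed under application $(\xi)\eta$ (written $\xi\eta$), and containing, for each sequence $(\xi_i)_{i\in\mathbb N}$ of closed terms (no occurrence of $p,q_0,\dots,q_N$), a constant $\bigwedge_i\xi_i$ (injectively, well-founded). Stacks: finite sequences $t_0\cdot\ldots\cdot t_{n-1}\cdot\pi_0$ of terms, $\pi_0$ the empty stack; $\Pi$ the set of stacks. $\ell_t=((C)(B)CB)t$, $k_{\pi_0}=A$, $k_{t\cdot\pi}=(\ell_t)k_\pi$; $\sigma=(BW)(C)(B)BB$, $\underline0=(K)I$, $\underline{n+1}=(\sigma)\underline n$. Execution $\succ$ is generated by the one-step rules: $(\xi)\eta\star\pi\succ\xi\star\eta\cdot\pi$; $B\star\xi\cdot\eta\cdot\zeta\cdot\pi\succ\xi\star(\eta)\zeta\cdot\pi$; $C\star\xi\cdot\eta\cdot\zeta\cdot\pi\succ\xi\star\zeta\cdot\eta\cdot\pi$;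 $I\star\xi\cdot\pi\succ\xi\star\pi$; $K\star\xi\cdot\eta\cdot\pi\succ\xi\star\pi$; $W\star\xi\cdot\eta\cdot\pi\succ\xi\star\eta\cdot\eta\cdot\pi$; $cc\star\xi\cdot\pi\succ\xi\star k_\pi\cdot\pi$; $A\star\xi\cdot\pi\succ\xi\star\pi_0$; $\bigwedge_i\xi_i\star\underline n\cdot\pi\succ\xi_n\star\pi$ (at most one rule applies to a given process). Pole $\perp\!\!\!\perp=\{\xi\star\pi:\exists\varpi,\ \xi\star\pi\succ p\star\varpi\}$. Efficient occurrence: for each process $\xi\star\pi\in\perp\!\!\!\perp$ one occurrence of $p$ in it is called efficient, defined by recursion on the length of the execution of $\xi\star\pi$ to a process of the form $p\star\varpi$: if $\xi=p$, it is this head occurrence; otherwise $\xi\star\pi$ reduces in one step by one of the rules above to a process $\xi_1\star\pi_1\in\perp\!\!\!\perp$, and the efficient occurrence of $\xi\star\pi$ is the occurrence of $p$ in $\xi\star\pi$ from which the efficient occurrence of $p$ in $\xi_1\star\pi_1$ originates under that rule (e.g. for the $cc$ rule, an occurrence lying in $k_\pi$ or in $\pi$ in $\xi\star k_\pi\cdot\pi$ corresponds to the matching occurrence in $\pi$ in $cc\star\xi\cdot\pi$). *)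

theory Defs
  imports Main
begin

text \<open>Terms, parametrised by a type of labels carried by occurrences of the
constant p.  The genuine terms of the paper are the terms of type unit tm
(p = P ()).  Labelled terms (type nat tm) are used to name individual
occurrences of p, so that the origin of occurrences can be traced through
execution.  Q i is the constant q_i; Inf f is the constant for the
sequence f (closedness is imposed by wf_tm).\<close>

datatype 'l tm = B | C | I | K | W | CC | A | P 'l | Q nat
  | App "'l tm" "'l tm" | Inf "nat \<Rightarrow> 'l tm"

primrec closed_tm :: "'l tm \<Rightarrow> bool" where
  "closed_tm B = True" | "closed_tm C = True" | "closed_tm I = True"
| "closed_tm K = True" | "closed_tm W = True" | "closed_tm CC = True"
| "closed_tm A = True" | "closed_tm (P l) = False" | "closed_tm (Q i) = False"
| "closed_tm (App s t) = (closed_tm s \<and> closed_tm t)"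
| "closed_tm (Inf f) = (\<forall>i. closed_tm (f i))"

primrec wf_tm :: "nat \<Rightarrow> 'l tm \<Rightarrow> bool" where
  "wf_tm N B = True" | "wf_tm N C = True" | "wf_tm N I = True"
| "wf_tm N K = True" | "wf_tm N W = True" | "wf_tm N CC = True"
| "wf_tm N A = True" | "wf_tm N (P l) = True" | "wf_tm N (Q i) = (i \<le> N)"
| "wf_tm N (App s t) = (wf_tm N s \<and> wf_tm N t)"
| "wf_tm N (Inf f) = (\<forall>i. closed_tm (f i) \<and> wf_tm N (f i))"

type_synonym 'l proc = "'l tm \<times> 'l tm list"

definition ell :: "'l tm \<Rightarrow> 'l tm" where
  "ell t = App (App C (App (App B C) B)) t"

primrec kst :: "'l tm list \<Rightarrow> 'l tm" where
  "kst [] = A"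
| "kst (t # \<pi>) = App (ell t) (kst \<pi>)"

definition sigma :: "'l tm" where
  "sigma = App (App B W) (App C (App (App B B) B))"

primrec num :: "nat \<Rightarrow> 'l tm" where
  "num 0 = App K I"
| "num (Suc n) = App sigma (num n)"

fun step :: "'l proc \<Rightarrow> 'l proc option" where
  "step (App x y, \<pi>) = Some (x, y # \<pi>)"
| "step (B, x # y # z # \<pi>) = Some (x, App y z # \<pi>)"
| "step (C, x # y # z # \<pi>) = Some (x, z # y # \<pi>)"
| "step (I, x # \<pi>) = Some (x, \<pi>)"
| "step (K, x # y # \<pi>) = Some (x, \<pi>)"
| "step (W, x # y # \<pi>) = Some (x, y # y # \<pi>)"
| "step (CC, x # \<pi>) = Some (x, kst \<pi> # \<pi>)"
| "step (A, x # \<pi>) = Some (x, [])"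
| "step (Inf f, x # \<pi>) =
     (if \<exists>n. x = num n then Some (f (THE n. x = num n), \<pi>) else None)"
| "step _ = None"

definition exec :: "'l proc \<Rightarrow> 'l proc \<Rightarrow> bool" where
  "exec = (\<lambda>a b. step a = Some b)\<^sup>*\<^sup>*"

definition pole :: "'l proc \<Rightarrow> bool" where
  "pole pr \<longleftrightarrow> (\<exists>l \<omega>. exec pr (P l, \<omega>))"

primrec subst :: "('l \<Rightarrow> 'm tm) \<Rightarrow> 'l tm \<Rightarrow> 'm tm" where
  "subst g B = B" | "subst g C = C" | "subst g I = I"
| "subst g K = K" | "subst g W = W" | "subst g CC = CC"
| "subst g A = A" | "subst g (P l) = g l" | "subst g (Q i) = Q i"
| "subst g (App s t) = App (subst g s) (subst g t)"
| "subst g (Inf f) = Inf (\<lambda>i. subst g (f i))"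

definition subst_proc :: "('l \<Rightarrow> 'm tm) \<Rightarrow> 'l proc \<Rightarrow> 'm proc" where
  "subst_proc g pr = (subst g (fst pr), map (subst g) (snd pr))"

definition erase_proc :: "'l proc \<Rightarrow> unit proc" where
  "erase_proc = subst_proc (\<lambda>_. P ())"

text \<open>Labels of the occurrences of p (constants for sequences are closed, so
contain no occurrence of p).\<close>
primrec occs :: "'l tm \<Rightarrow> 'l list" where
  "occs B = []" | "occs C = []" | "occs I = []"
| "occs K = []" | "occs W = []" | "occs CC = []"
| "occs A = []" | "occs (P l) = [l]" | "occs (Q i) = []"
| "occs (App s t) = occs s @ occs t"
| "occs (Inf f) = []"

definition proc_occs :: "'l proc \<Rightarrow> 'l list" where
  "proc_occs pr = occs (fst pr) @ concat (map occs (snd pr))"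

text \<open>In a process whose occurrences of p carry pairwise distinct labels, the
efficient occurrence is the one whose label ends up in head position:
labels are moved/copied/discarded along with the subterms carrying them,
which is exactly the origin relation of the paper.\<close>
definition eff :: "'l proc \<Rightarrow> 'l" where
  "eff L = (THE l. \<exists>\<omega>. exec L (P l, \<omega>))"

end

theory Submission imports Defs begin
lemma subst_closed: "closed_tm y \<Longrightarrow> subst g y = y"
  by (induct y) (auto intro: ext)
lemma closed_num: "closed_tm (num n)"
  by (induct n) (auto simp: sigma_def)
lemma subst_num: "subst g (num n) = num n"
  by (induct n) (simp_all add: sigma_def)
lemma num_inj: "num n = num m \<Longrightarrow> n = m"
  by (induct n arbitrary: m; case_tac m; simp add: sigma_def)
lemma kst_subst: "subst g (kst s) = kst (map (subst g) s)"
  by (induct s) (auto simp: ell_def)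
lemma subst_P_inj:
  fixes h :: "'l \<Rightarrow> 'm tm" and x y :: "'l tm"
  shows "(\<And>l. \<exists>u. h l = P u) \<Longrightarrow> closed_tm y \<Longrightarrow> subst h x = subst h y \<Longrightarrow> x = y"
proof (induct x arbitrary: y)
  case (P l)
  obtain u where "h l = P u" using P(1) by blast
  then show ?case using P(2,3) by (cases y) auto
next
  case (App a b)
  then obtain c d where y: "y = App c d" by (cases y) auto
  with App have "closed_tm c" "closed_tm d" "subst h a = subst h c" "subst h b = subst h d" by auto
  then have "a = c" "b = d" using App.hyps App.prems(1) by blast+
  then show ?case using y by simp
next
  case (Inf f)
  then obtain f' where y: "y = Inf f'" by (cases y) auto
  with Inf have c: "\<And>i. closed_tm (f' i)" and e: "\<And>i. subst h (f i) = subst h (f' i)" by (auto dest: fun_cong)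
  have "\<And>i. f i = f' i"
    by (rule Inf.hyps, simp, rule Inf.prems(1), rule c, rule e)
  then show ?case using y by (metis ext)
next
  case B then show ?case by (cases y) auto
next
  case C then show ?case by (cases y) auto
next
  case I then show ?case by (cases y) auto
next
  case K then show ?case by (cases y) auto
next
  case W then show ?case by (cases y) auto
next
  case CC then show ?case by (cases y) auto
next
  case A then show ?case by (cases y) auto
next
  case (Q i) then show ?case by (cases y) auto
qed

lemma subst_num_inv: fixes h :: "'l \<Rightarrow> 'm tm" assumes "\<And>l. \<exists>u. h l = P u" "subst h x = num n" shows "x = num n"
proof -
  have "subst h x = subst h (num n)" using assms(2) by (simp add: subst_num)
  then show ?thesis using subst_P_inj[of h, OF assms(1) closed_num] by blast
qed

lemma list3_cases: "(s = [] \<Longrightarrow> R) \<Longrightarrow> (\<And>a. s=[a] \<Longrightarrow> R) \<Longrightarrow> (\<And>a b. s=[a,b] \<Longrightarrow> R)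
   \<Longrightarrow> (\<And>a b c r. s = a#b#c#r \<Longrightarrow> R) \<Longrightarrow> R"
  apply (cases s, blast)
  apply (case_tac list, blast)
  apply (case_tac lista, blast, blast)
  done
lemma ex_num[simp]: "\<exists>m. num n = num m" by (rule exI, rule refl)
lemma the_num[simp]: "(THE m. num n = num m) = n"
  using num_inj by blast
definition sp :: "('l \<Rightarrow> 'm tm) \<Rightarrow> 'l proc \<Rightarrow> 'm proc" where
  "sp g pr = (subst g (fst pr), map (subst g) (snd pr))"

lemma step_eq: "(\<forall>l. x \<noteq> P l) \<Longrightarrow> (\<forall>f. x \<noteq> Inf f) \<Longrightarrow>
   step (subst g x, map (subst g) s) = map_option (sp g) (step (x, s))"
  by (cases x; cases s rule: list3_cases; simp add: kst_subst ell_def sp_def)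

lemma step_Inf: "step (Inf f, s) = Some (y, s') \<Longrightarrow>
   step (subst g (Inf f), map (subst g) s) = Some (subst g y, map (subst g) s')"
proof -
  assume st: "step (Inf f, s) = Some (y, s')"
  then obtain a r where s: "s = a # r" by (cases s) auto
  from st obtain n where "a = num n" using s by (auto split: if_splits)
  then show ?thesis using st s by (simp add: subst_num)
qed

lemma step_subst: "step (x, s) = Some (y, s') \<Longrightarrow>
   step (subst g x, map (subst g) s) = Some (subst g y, map (subst g) s')"
proof (cases "\<exists>f. x = Inf f")
  case True
  then obtain f where x: "x = Inf f" by blast
  then show "step (x, s) = Some (y, s') \<Longrightarrow> ?thesis" using step_Inf by blast
next
  case False
  assume st: "step (x, s) = Some (y, s')"
  have "\<forall>l. x \<noteq> P l" using st by auto
  then show ?thesis using step_eq[of x g s] False st by (simp add: sp_def)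
qed

lemma step_subst_None: "(\<And>l. \<exists>u. h l = P u) \<Longrightarrow> step (x, s) = None \<Longrightarrow>
   step (subst h x, map (subst h) s) = None"
proof -
  assume h: "\<And>l. \<exists>u. h l = P u" and st: "step (x, s) = None"
  show ?thesis
  proof (cases "\<exists>l. x = P l")
    case True
    then obtain l where "x = P l" by blast
    moreover obtain u where "h l = P u" using h by blast
    ultimately show ?thesis by simp
  next
    case nP: False
    show ?thesis
    proof (cases "\<exists>f. x = Inf f")
      case False
      then show ?thesis using step_eq[of x h s] nP st by simp
    next
      case True
      then obtain f where x: "x = Inf f" by blast
      show ?thesis
      proof (cases s)
        case Nil then show ?thesis using x by simp
      next
        case (Cons a r)
        then have "\<not> (\<exists>n. a = num n)" using st x by (auto split: if_splits)
        then have "\<not> (\<exists>n. subst h a = num n)"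
        proof (intro notI)
          assume "\<exists>n. subst h a = num n"
          then obtain n where "subst h a = num n" by blast
          then have "a = num n" by (rule subst_num_inv[rotated]) (rule h)
          then show False using \<open>\<not> (\<exists>n. a = num n)\<close> by blast
        qed
        then show ?thesis using x Cons by simp
      qed
    qed
  qed
qed

lemma step_subst_proc: "step L = Some L' \<Longrightarrow> step (subst_proc g L) = Some (subst_proc g L')"
  using step_subst[of "fst L" "snd L" "fst L'" "snd L'" g] by (simp add: subst_proc_def)

lemma exec_subst: "exec L L' \<Longrightarrow> exec (subst_proc g L) (subst_proc g L')"
  unfolding exec_def
proof (induct rule: rtranclp_induct)
  case (step y z) then show ?case
    by (metis (mono_tags, lifting) rtranclp.simps step_subst_proc)
qed simp

lemma lift_step: "(\<And>l. \<exists>u. h l = P u) \<Longrightarrow> step (subst_proc h L) = Some M \<Longrightarrow>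
  \<exists>L'. step L = Some L' \<and> M = subst_proc h L'"
proof (cases "step L")
  case None
  assume "(\<And>l. \<exists>u. h l = P u)" "step (subst_proc h L) = Some M"
  then show ?thesis using step_subst_None[of h "fst L" "snd L"] None
    by (simp add: subst_proc_def)
next
  case (Some L')
  assume "step (subst_proc h L) = Some M"
  then show ?thesis using step_subst_proc[OF Some, of h] Some by auto
qed

lemma lift_exec: assumes h: "\<And>l. \<exists>u. h l = P u" and e: "exec M0 M1" and m: "M0 = subst_proc h L"
  shows "\<exists>L'. exec L L' \<and> M1 = subst_proc h L'"
  using e unfolding exec_def
proof (induct rule: rtranclp_induct)
  case base then show ?case using m by (intro exI[of _ L]) simp
next
  case (step y z)
  from step(3) obtain L' where L': "(\<lambda>a b. step a = Some b)\<^sup>*\<^sup>* L L'" "y = subst_proc h L'" by blast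
  have "step (subst_proc h L') = Some z" using step(2) L'(2) by simp
  then have "\<exists>L''. step L' = Some L'' \<and> z = subst_proc h L''" by (rule lift_step[rotated]) (rule h)
  then obtain L'' where L'': "step L' = Some L''" "z = subst_proc h L''" by blast
  have "(\<lambda>a b. step a = Some b)\<^sup>*\<^sup>* L L''" using L'(1) L''(1) by (rule rtranclp.rtrancl_into_rtrancl)
  then show ?case using L''(2) by blast
qed

lemma exec_det: "exec a b \<Longrightarrow> exec a c \<Longrightarrow> step b = None \<Longrightarrow> step c = None \<Longrightarrow> b = c"
  unfolding exec_def
proof (induct arbitrary: c rule: converse_rtranclp_induct)
  case base
  from base(1) show ?case
  proof (cases rule: converse_rtranclpE)
    case base then show ?thesis by simp
  next
    case (step w) then show ?thesis using base(2) by simp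
  qed
next
  case (step y z)
  from step(4) show ?case
  proof (cases rule: converse_rtranclpE)
    case base then show ?thesis using step(1) step(6) by simp
  next
    case (step w)
    then have "w = z" using \<open>step y = Some z\<close> by simp
    then show ?thesis using step(2) \<open>step y = Some z\<close> by (metis (no_types) \<open>step c = None\<close> \<open>step b = None\<close> \<open>\<And>c. _ \<Longrightarrow> _ \<Longrightarrow> _ \<Longrightarrow> b = c\<close>)
  qed
qed

theorem lemma4:
  fixes N :: nat and \<xi> :: "unit tm" and \<pi> :: "unit tm list"
    and L :: "nat proc"
  assumes "wf_tm N \<xi>" and "\<forall>t\<in>set \<pi>. wf_tm N t"
    and "pole (\<xi>, \<pi>)"
    and "erase_proc L = (\<xi>, \<pi>)" and "distinct (proc_occs L)"
  shows "(\<forall>g :: nat \<Rightarrow> unit tm. (\<forall>l. wf_tm N (g l)) \<and> g (eff L) = P ()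
            \<longrightarrow> pole (subst_proc g L))
       \<and> (\<forall>g :: nat \<Rightarrow> unit tm. (\<forall>l. wf_tm N (g l)) \<and> g (eff L) = Q 0
            \<longrightarrow> \<not> pole (subst_proc g L) \<and> (\<exists>\<omega>. exec (subst_proc g L) (Q 0, \<omega>)))"
proof -
  obtain u \<omega> where ex: "exec (\<xi>, \<pi>) (P u, \<omega>)" using assms(3) unfolding pole_def by auto
  have "\<exists>L'. exec L L' \<and> (P u, \<omega>) = subst_proc (\<lambda>_. P ()) L'"
    by (rule lift_exec[where h="\<lambda>_. P ()"], simp, rule ex,
        use assms(4) in \<open>simp add: erase_proc_def\<close>)
  then obtain L' where L': "exec L L'" "(P u, \<omega>) = subst_proc (\<lambda>_. P ()) L'" by blast
  obtain a \<omega>' where L'ab: "L' = (a, \<omega>')" by (cases L')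
  have "subst (\<lambda>_. P ()) a = P u" using L'(2) L'ab by (simp add: subst_proc_def)
  then obtain l where "a = P l" by (cases a) auto
  then have exL: "exec L (P l, \<omega>')" using L'(1) L'ab by simp
  have stuck: "\<And>l \<omega>. step (P l, \<omega>) = None" by simp
  have effL: "eff L = l" unfolding eff_def
  proof (rule the_equality)
    show "\<exists>\<omega>. exec L (P l, \<omega>)" using exL by blast
  next
    fix l2 assume "\<exists>\<omega>. exec L (P l2, \<omega>)"
    then obtain \<omega>2 where e2: "exec L (P l2, \<omega>2)" by blast
    have "(P l2, \<omega>2) = (P l, \<omega>')" using exec_det[OF e2 exL stuck stuck] .
    then show "l2 = l" by simp
  qed
  have exg: "\<And>g. exec (subst_proc g L) (g l, map (subst g) \<omega>')"
    using exec_subst[OF exL] by (simp add: subst_proc_def)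
  show ?thesis
  proof (intro conjI allI impI)
    fix g :: "nat \<Rightarrow> unit tm" assume "(\<forall>l. wf_tm N (g l)) \<and> g (eff L) = P ()"
    then show "pole (subst_proc g L)" using exg[of g] effL unfolding pole_def by auto
  next
    fix g :: "nat \<Rightarrow> unit tm" assume "(\<forall>l. wf_tm N (g l)) \<and> g (eff L) = Q 0"
    then have q: "exec (subst_proc g L) (Q 0, map (subst g) \<omega>')" using exg[of g] effL by auto
    then show "\<exists>\<omega>. exec (subst_proc g L) (Q 0, \<omega>)" by blast
    show "\<not> pole (subst_proc g L)"
    proof
      assume "pole (subst_proc g L)"
      then obtain v \<omega>3 where e3: "exec (subst_proc g L) (P v, \<omega>3)" unfolding pole_def by auto
      have "step (Q 0, map (subst g) \<omega>') = None" by simp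
      from exec_det[OF e3 q stuck this] show False by simp
    qed
  qed
qed

end
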